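(* Every finite dimensional complex Banach space has the $\mathbf{L}_{p,p}$-nu.
   Context: For a Banach space $X$: $\Pi(X)=\{(x,x^* )\in S_X\times S_{X^*}: x^*(x)=1\}$; for $T\in\mathcal{L}(X)$ (bounded linear operators on $X$), $v(T)=\sup\{|x^*(Tx)|:(x,x^* )\in\Pi(X)\}$. $X$ has the $\mathbf{L}_{p,p}$-nu if for every $\varepsilon>0$ and $(x,x^* )\in\Pi(X)$ there is $\eta(\varepsilon,(x,x^* ))>0$ such that whenever $T\in\mathcal{L}(X)$ with $v(T)=1$ satisfies $|x^*(Tx)|>1-\eta(\varepsilon,(x,x^* ))$, there is $S\in\mathcal{L}(X)$ with $v(S)=1$, $|x^*(Sx)|=1$ and $\|S-T\|<\varepsilon$. *)

theory Defs
  imports "HOL-Analysis.Analysis"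
begin

text \<open>A finite dimensional complex Banach space is modelled (up to linear isometry)
  as complex^'n (for an arbitrary finite index type 'n) equipped with an arbitrary
  norm N over the complex scalars. Every such space is complete.\<close>

definition is_cnorm :: "(complex^'n \<Rightarrow> real) \<Rightarrow> bool" where
  "is_cnorm N \<longleftrightarrow>
     (\<forall>x y. N (x + y) \<le> N x + N y) \<and>
     (\<forall>c x. N (c *s x) = cmod c * N x) \<and>
     (\<forall>x. N x = 0 \<longleftrightarrow> x = 0)"

text \<open>Complex-linear functionals on complex^'n (all are bounded, since the space is
  finite dimensional).\<close>
definition clin_fun :: "(complex^'n \<Rightarrow> complex) \<Rightarrow> bool" where
  "clin_fun f \<longleftrightarrow> (\<forall>x y. f (x + y) = f x + f y) \<and> (\<forall>c x. f (c *s x) = c * f x)"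

text \<open>Complex-linear operators on complex^'n (all are bounded).\<close>
definition clin_op :: "(complex^'n \<Rightarrow> complex^'n) \<Rightarrow> bool" where
  "clin_op T \<longleftrightarrow> (\<forall>x y. T (x + y) = T x + T y) \<and> (\<forall>c x. T (c *s x) = c *s T x)"

text \<open>Dual norm of a functional and operator norm of an operator.\<close>
definition dual_norm :: "(complex^'n \<Rightarrow> real) \<Rightarrow> (complex^'n \<Rightarrow> complex) \<Rightarrow> real" where
  "dual_norm N f = Sup {cmod (f x) | x. N x \<le> 1}"

definition op_norm :: "(complex^'n \<Rightarrow> real) \<Rightarrow> (complex^'n \<Rightarrow> complex^'n) \<Rightarrow> real" where
  "op_norm N T = Sup {N (T x) | x. N x \<le> 1}"

text \<open>The set Pi(X) of states.\<close>
definition states :: "(complex^'n \<Rightarrow> real) \<Rightarrow> ((complex^'n) \<times> (complex^'n \<Rightarrow> complex)) set" where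
  "states N = {(x, f). N x = 1 \<and> clin_fun f \<and> dual_norm N f = 1 \<and> f x = 1}"

text \<open>Numerical radius v(T).\<close>
definition num_radius :: "(complex^'n \<Rightarrow> real) \<Rightarrow> (complex^'n \<Rightarrow> complex^'n) \<Rightarrow> real" where
  "num_radius N T = Sup {cmod (f (T x)) | x f. (x, f) \<in> states N}"

text \<open>The L_{p,p}-nu property.\<close>
definition Lpp_nu :: "(complex^'n \<Rightarrow> real) \<Rightarrow> bool" where
  "Lpp_nu N \<longleftrightarrow>
    (\<forall>\<epsilon>>0. \<forall>(x, f) \<in> states N. \<exists>\<eta>>0. \<forall>T. clin_op T \<and> num_radius N T = 1 \<and>
        cmod (f (T x)) > 1 - \<eta> \<longrightarrow>
        (\<exists>S. clin_op S \<and> num_radius N S = 1 \<and> cmod (f (S x)) = 1 \<and>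
             op_norm N (\<lambda>y. S y - T y) < \<epsilon>))"

end

theory Submission
  imports Defs "HOL-Computational_Algebra.Fundamental_Theorem_Algebra"
begin

lemma of_real_smult_vec: "complex_of_real r *s (x::complex^'n) = r *\<^sub>R x"
proof (subst vec_eq_iff, intro allI)
  fix i show "(complex_of_real r *s x) $ i = (r *\<^sub>R x) $ i"
    by (metis vector_scaleR_component vector_smult_component scaleR_conv_of_real)
qed

context
  fixes N :: "complex^'n \<Rightarrow> real"
  assumes cn: "is_cnorm N"
begin

lemma N_tri: "N (x + y) \<le> N x + N y" using cn unfolding is_cnorm_def by blast
lemma N_hom: "N (c *s x) = cmod c * N x" using cn unfolding is_cnorm_def by blast
lemma N_eq0: "N x = 0 \<longleftrightarrow> x = 0" using cn unfolding is_cnorm_def by blast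
lemma N_0[simp]: "N 0 = 0" using N_eq0 by simp
lemma N_neg: "N (- x) = N x"
proof -
  have "- x = (-1::complex) *s x" by (simp add: vec_eq_iff)
  then show ?thesis using N_hom[of "-1" x] by simp
qed
lemma N_ge0: "0 \<le> N x"
  using N_tri[of x "-x"] N_neg[of x] by simp
lemma N_scaleR: "N (r *\<^sub>R x) = \<bar>r\<bar> * N x"
  using N_hom[of "complex_of_real r" x] by (simp add: of_real_smult_vec)
lemma N_diff: "N (x - y) \<le> N x + N y"
  using N_tri[of x "-y"] N_neg[of y] by simp
lemma N_rev: "\<bar>N x - N y\<bar> \<le> N (x - y)"
proof -
  have "N x \<le> N (x - y) + N y" using N_tri[of "x - y" y] by simp
  moreover have "N y \<le> N (x - y) + N x" using N_tri[of "y - x" x] N_neg[of "x - y"] by simp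
  ultimately show ?thesis by linarith
qed
lemma N_sum: "N (sum g I) \<le> (\<Sum>i\<in>I. N (g i))"
proof (induct I rule: infinite_finite_induct)
  case (insert x F)
  then show ?case using N_tri[of "g x" "sum g F"] by simp
qed simp_all

definition "Bn = (\<Sum>i\<in>UNIV. N (axis i (1::complex)))"

lemma Bn_ge0: "0 \<le> Bn" unfolding Bn_def by (simp add: sum_nonneg N_ge0)

lemma N_upper: "N x \<le> Bn * norm x"
proof -
  have "N x = N (\<Sum>i\<in>UNIV. (x$i) *s axis i 1)" by (simp add: basis_expansion)
  also have "\<dots> \<le> (\<Sum>i\<in>UNIV. N ((x$i) *s axis i 1))" by (rule N_sum)
  also have "\<dots> = (\<Sum>i\<in>UNIV. cmod (x$i) * N (axis i 1))" by (simp add: N_hom)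
  also have "\<dots> \<le> (\<Sum>i\<in>UNIV. norm x * N (axis i 1))"
    by (intro sum_mono mult_right_mono) (auto simp: Finite_Cartesian_Product.norm_nth_le N_ge0)
  also have "\<dots> = Bn * norm x" by (simp add: Bn_def sum_distrib_left mult.commute)
  finally show ?thesis .
qed

lemma N_lip: "\<bar>N x - N y\<bar> \<le> Bn * dist x y"
  using N_rev[of x y] N_upper[of "x - y"] by (simp add: dist_norm)

lemma lip_cont: 
  fixes h :: "'a::metric_space \<Rightarrow> real"
  assumes "\<And>a b. \<bar>h a - h b\<bar> \<le> L * dist a b" "0 \<le> L"
  shows "continuous_on S h"
  unfolding continuous_on_iff
proof (intro ballI allI impI)
  fix x e assume "0 < (e::real)"
  show "\<exists>d>0. \<forall>x'\<in>S. dist x' x < d \<longrightarrow> dist (h x') (h x) < e"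
  proof (intro exI[of _ "e / (L + 1)"] conjI ballI impI)
    show "0 < e / (L + 1)" using \<open>0 < e\<close> assms(2) by simp
    fix x' assume "dist x' x < e / (L + 1)"
    then have "(L+1) * dist x' x < e" using assms(2) by (simp add: field_simps)
    moreover have "\<bar>h x' - h x\<bar> \<le> (L+1) * dist x' x" using assms(1)[of x' x]
      by (smt (verit) mult_right_mono zero_le_dist distrib_right)
    ultimately show "dist (h x') (h x) < e" by (simp add: dist_real_def)
  qed
qed

lemma N_cont: "continuous_on S N"
  by (rule lip_cont[OF N_lip Bn_ge0])

lemma N_lower: "\<exists>A>0. \<forall>x. A * norm x \<le> N x"
proof -
  obtain e :: "complex^'n" where e: "norm e = 1" using vector_choose_size[of 1] by auto
  have "compact (sphere (0::complex^'n) 1)" by simp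
  moreover have "sphere (0::complex^'n) 1 \<noteq> {}" using e by auto
  ultimately obtain x0 where x0: "x0 \<in> sphere 0 1" "\<forall>y\<in>sphere 0 1. N x0 \<le> N y"
    using continuous_attains_inf[OF _ _ N_cont] by blast
  have "x0 \<noteq> 0" using x0 by auto
  then have A: "N x0 > 0" using N_ge0[of x0] N_eq0[of x0] by linarith
  show ?thesis
  proof (intro exI[of _ "N x0"] conjI allI A)
    fix x :: "complex^'n"
    show "N x0 * norm x \<le> N x"
    proof (cases "x = 0")
      case False
      have "(1/norm x) *\<^sub>R x \<in> sphere 0 1" using False by simp
      then have "N x0 \<le> N ((1/norm x) *\<^sub>R x)" using x0 by blast
      also have "\<dots> = N x / norm x" by (simp add: N_scaleR)
      finally show ?thesis using False by (simp add: field_simps)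
    qed simp
  qed
qed

end


lemma clin_fun_0: "clin_fun f \<Longrightarrow> f 0 = 0"
  unfolding clin_fun_def by (metis add_cancel_right_right add_0)
lemma clin_fun_sum: "clin_fun f \<Longrightarrow> f (sum g I) = (\<Sum>i\<in>I. f (g i))"
  using sum_comp_morphism[of f g I] clin_fun_0[of f] unfolding clin_fun_def comp_def by metis
lemma clin_fun_expand: "clin_fun f \<Longrightarrow> f x = (\<Sum>i\<in>UNIV. x$i * f (axis i 1))"
proof -
  assume f: "clin_fun f"
  have "f x = f (\<Sum>i\<in>UNIV. (x$i) *s axis i 1)" by (simp add: basis_expansion)
  also have "\<dots> = (\<Sum>i\<in>UNIV. f ((x$i) *s axis i 1))" by (rule clin_fun_sum[OF f])
  also have "\<dots> = (\<Sum>i\<in>UNIV. x$i * f (axis i 1))" using f unfolding clin_fun_def by simp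
  finally show ?thesis .
qed
lemma clin_fun_scaleR: "clin_fun f \<Longrightarrow> f (r *\<^sub>R x) = of_real r * f x"
  unfolding clin_fun_def by (metis of_real_smult_vec)
lemma clin_fun_diff: "clin_fun f \<Longrightarrow> f (x - y) = f x - f y"
  unfolding clin_fun_def by (metis add_diff_cancel diff_add_cancel)

lemma clin_op_0: "clin_op T \<Longrightarrow> T 0 = 0"
  unfolding clin_op_def by (metis add_cancel_right_right add_0)
lemma clin_op_sum: "clin_op T \<Longrightarrow> T (sum g I) = (\<Sum>i\<in>I. T (g i))"
  using sum_comp_morphism[of T g I] clin_op_0[of T] unfolding clin_op_def comp_def by metis
lemma clin_op_diff: "clin_op T \<Longrightarrow> T (x - y) = T x - T y"
  unfolding clin_op_def by (metis add_diff_cancel diff_add_cancel)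

lemma norm_smult_vec: "norm (c *s (v::complex^'n)) = cmod c * norm v"
  unfolding norm_vec_def by (simp add: L2_set_right_distrib norm_mult)

definition opm :: "complex^'n^'n \<Rightarrow> complex^'n \<Rightarrow> complex^'n" where
  "opm M y = (\<Sum>i\<in>UNIV. (y$i) *s (M$i))"

lemma clin_op_opm: "clin_op (opm M)"
  unfolding clin_op_def opm_def
  by (auto simp: vec_eq_iff sum.distrib algebra_simps sum_distrib_left)

lemma opm_of_op: "clin_op T \<Longrightarrow> T = opm (\<chi> i. T (axis i 1))"
proof
  fix y assume T: "clin_op T"
  have "T y = T (\<Sum>i\<in>UNIV. (y$i) *s axis i 1)" by (simp add: basis_expansion)
  also have "\<dots> = (\<Sum>i\<in>UNIV. T ((y$i) *s axis i 1))" by (rule clin_op_sum[OF T])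
  also have "\<dots> = (\<Sum>i\<in>UNIV. (y$i) *s T (axis i 1))" using T unfolding clin_op_def by simp
  finally show "T y = opm (\<chi> i. T (axis i 1)) y" by (simp add: opm_def)
qed

lemma opm_axis: "opm M (axis i 1) = M $ i"
proof -
  have "opm M (axis i 1) = (\<Sum>j\<in>UNIV. (if j = i then M$j else 0))"
    unfolding opm_def axis_def by (intro sum.cong) auto
  then show ?thesis by simp
qed

lemma opm_diff: "opm (M - M') y = opm M y - opm M' y"
  unfolding opm_def by (simp add: sum_subtractf vec_eq_iff algebra_simps)

lemma opm_scaleR: "opm (r *\<^sub>R M) y = r *\<^sub>R opm M y"
  unfolding opm_def by (simp add: scaleR_sum_right vec_eq_iff algebra_simps)

lemma norm_opm: "norm (opm M y) \<le> CARD('n) * norm y * norm (M::complex^'n^'n)"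
proof -
  have "norm (opm M y) \<le> (\<Sum>i\<in>UNIV. norm ((y$i) *s (M$i)))"
    unfolding opm_def by (rule norm_sum)
  also have "\<dots> = (\<Sum>i\<in>UNIV. cmod (y$i) * norm (M$i))"
    by (simp add: norm_smult_vec)
  also have "\<dots> \<le> (\<Sum>i\<in>(UNIV::'n set). norm y * norm M)"
    by (intro sum_mono mult_mono) (auto simp: Finite_Cartesian_Product.norm_nth_le)
  finally show ?thesis by simp
qed



context
  fixes N :: "complex^'n \<Rightarrow> real"
  assumes cn: "is_cnorm N"
begin

definition "An = (SOME A. A > 0 \<and> (\<forall>x. A * norm x \<le> N x))"

lemma An: "An > 0" "An * norm x \<le> N x"
proof -
  have "An > 0 \<and> (\<forall>x. An * norm x \<le> N x)"
    unfolding An_def using someI_ex[OF N_lower[OF cn]] by blast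
  then show "An > 0" "An * norm x \<le> N x" by auto
qed

lemma norm_le_N: "norm x \<le> N x / An"
  using An(2)[of x] An(1) by (simp add: field_simps)

lemma HB:
  assumes y: "N y = 1"
  shows "\<exists>f. (y, f) \<in> states N"
proof -
  let ?S = "{w. N w < 1}"
  have cvx: "convex ?S"
    unfolding convex_def
  proof (intro allI impI ballI, clarify)
    fix x z :: "complex^'n" and u v :: real
    assume h: "N x < 1" "N z < 1" "0 \<le> u" "0 \<le> v" "u + v = 1"
    have "N (u *\<^sub>R x + v *\<^sub>R z) \<le> u * N x + v * N z"
      using N_tri[OF cn, of "u *\<^sub>R x" "v *\<^sub>R z"] h by (simp add: N_scaleR[OF cn])
    also have "\<dots> < 1"
    proof (cases "u = 0")
      case True then show ?thesis using h by simp
    next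
      case False
      then have "u * N x < u * 1" using h by (intro mult_strict_left_mono) auto
      moreover have "v * N z \<le> v * 1" using h by (intro mult_left_mono) auto
      ultimately show ?thesis using h by linarith
    qed
    finally show "N (u *\<^sub>R x + v *\<^sub>R z) < 1" .
  qed
  have "(0::complex^'n) \<in> ?S" by (simp add: N_0[OF cn])
  then have "?S \<noteq> {}" by blast
  moreover have "?S \<inter> {y} = {}" using y by auto
  ultimately obtain a b where ab: "a \<noteq> 0" "\<forall>w\<in>?S. a \<bullet> w \<le> b" "\<forall>w\<in>{y}. a \<bullet> w \<ge> b"
    using separating_hyperplane_sets[OF cvx convex_singleton] by blast
  have ay: "0 < a \<bullet> y"
  proof -
    define t where "t = 1 / (2 * (Bn N * norm a + 1))"
    have Bn0: "0 \<le> Bn N * norm a" using Bn_ge0[OF cn] by simp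
    have t0: "t > 0" unfolding t_def using Bn0 by simp
    have "N (t *\<^sub>R a) = t * N a" using t0 by (simp add: N_scaleR[OF cn])
    also have "\<dots> \<le> t * (Bn N * norm a)" using t0 N_upper[OF cn, of a] by simp
    also have "\<dots> < 1" unfolding t_def using Bn0 by (simp add: field_simps)
    finally have "a \<bullet> (t *\<^sub>R a) \<le> b" using ab by auto
    moreover have "a \<bullet> (t *\<^sub>R a) > 0" using t0 ab(1) by simp
    ultimately show ?thesis using ab(3) by auto
  qed
  have key: "a \<bullet> w \<le> N w * (a \<bullet> y)" for w
  proof (rule ccontr)
    assume "\<not> ?thesis"
    then have lt: "N w * (a \<bullet> y) < a \<bullet> w" by simp
    define q where "q = (a \<bullet> w) / (a \<bullet> y)"
    define s where "s = (N w + q) / 2"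
    have q: "N w < q" using lt ay unfolding q_def by (simp add: field_simps)
    have s1: "N w < s" unfolding s_def using q by (simp add: field_simps)
    have s2: "s < q" unfolding s_def using q by (simp add: field_simps)
    have s0: "s > 0" using s1 N_ge0[OF cn, of w] by linarith
    have "N ((1/s) *\<^sub>R w) = N w / s" using s0 by (simp add: N_scaleR[OF cn])
    also have "\<dots> < 1" using s0 s1 by simp
    finally have "a \<bullet> ((1/s) *\<^sub>R w) \<le> b" using ab by auto
    then have "(a \<bullet> w) / s \<le> a \<bullet> y" using ab(3) by simp
    then have "a \<bullet> w \<le> s * (a \<bullet> y)" using s0 by (simp add: field_simps)
    moreover have "s * (a \<bullet> y) < a \<bullet> w" using s2 ay unfolding q_def by (simp add: field_simps)
    ultimately show False by simp
  qed
  define f where "f w = (\<Sum>i\<in>UNIV. cnj (a$i) * w$i) / complex_of_real (a \<bullet> y)" for w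
  have Re_f: "Re (f w) = (a \<bullet> w) / (a \<bullet> y)" for w
  proof -
    have "Re (\<Sum>i\<in>UNIV. cnj (a$i) * w$i) = (\<Sum>i\<in>UNIV. a$i \<bullet> w$i)"
      by (simp add: Re_sum inner_complex_def)
    then show ?thesis unfolding f_def by (simp add: inner_vec_def)
  qed
  have clf: "clin_fun f"
    unfolding clin_fun_def f_def
    by (auto simp: sum.distrib distrib_left add_divide_distrib sum_distrib_left algebra_simps)
  have reb: "Re (f w) \<le> N w" for w
    using key[of w] ay by (simp add: Re_f field_simps)
  have absb: "cmod (f w) \<le> N w" for w
  proof (cases "f w = 0")
    case True then show ?thesis using N_ge0[OF cn] by simp
  next
    case False
    define u where "u = cnj (f w) / complex_of_real (cmod (f w))"
    have cu: "cmod u = 1" using False by (simp add: u_def norm_divide)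
    have "f (u *s w) = u * f w" using clf unfolding clin_fun_def by blast
    also have "\<dots> = complex_of_real (cmod (f w))" using False
      unfolding u_def by (simp add: field_simps complex_norm_square[symmetric] power2_eq_square)
    finally have "Re (f (u *s w)) = cmod (f w)" by simp
    moreover have "N (u *s w) = N w" using cu by (simp add: N_hom[OF cn])
    ultimately show ?thesis using reb[of "u *s w"] by simp
  qed
  have fy: "f y = 1"
  proof -
    have r: "Re (f y) = 1" using ay by (simp add: Re_f)
    have "cmod (f y) \<le> 1" using absb[of y] y by simp
    then have "(cmod (f y))\<^sup>2 \<le> 1" by (simp add: power_le_one)
    then have "(Im (f y))\<^sup>2 \<le> 0" using r by (simp add: cmod_power2)
    then have "Im (f y) = 0" by simp
    then show ?thesis using r by (simp add: complex_eq_iff)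
  qed
  have dn: "dual_norm N f = 1"
    unfolding dual_norm_def
  proof (rule cSup_eq_maximum)
    show "1 \<in> {cmod (f x) |x. N x \<le> 1}" using fy y by (intro CollectI exI[of _ y]) simp
    show "z \<le> 1" if hz: "z \<in> {cmod (f x) |x. N x \<le> 1}" for z
    proof -
      obtain x where "z = cmod (f x)" "N x \<le> 1" using hz by blast
      then show ?thesis using absb[of x] by simp
    qed
  qed
  show ?thesis using clf dn fy y unfolding states_def by auto
qed

lemma states_ne: "states N \<noteq> {}"
proof -
  obtain e :: "complex^'n" where e: "norm e = 1" using vector_choose_size[of 1] by auto
  then have "e \<noteq> 0" by auto
  then have Ne: "N e > 0" using N_ge0[OF cn, of e] N_eq0[OF cn, of e] by linarith
  have "N ((1 / N e) *\<^sub>R e) = 1" using Ne by (simp add: N_scaleR[OF cn])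
  then show ?thesis using HB by blast
qed

lemma dual_bound:
  assumes f: "clin_fun f" and d: "dual_norm N f = 1"
  shows "cmod (f x) \<le> N x"
proof -
  define L where "L = (\<Sum>i\<in>UNIV. cmod (f (axis i 1)))"
  have fb: "cmod (f w) \<le> L * norm w" for w
  proof -
    have "cmod (f w) \<le> (\<Sum>i\<in>UNIV. cmod (w$i * f (axis i 1)))"
      using clin_fun_expand[OF f, of w] by (metis norm_sum)
    also have "\<dots> \<le> (\<Sum>i\<in>UNIV. norm w * cmod (f (axis i 1)))"
      by (intro sum_mono) (auto simp: norm_mult Finite_Cartesian_Product.norm_nth_le mult_right_mono)
    finally show ?thesis by (simp add: L_def sum_distrib_left mult.commute)
  qed
  have L0: "0 \<le> L" unfolding L_def by (simp add: sum_nonneg)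
  have bdd: "bdd_above {cmod (f x) |x. N x \<le> 1}"
  proof (rule bdd_aboveI[of _ "L / An"], clarify)
    fix w assume "N w \<le> 1"
    have "cmod (f w) \<le> L * norm w" by (rule fb)
    also have "\<dots> \<le> L * (N w / An)" using norm_le_N[of w] L0 by (intro mult_left_mono) auto
    also have "\<dots> \<le> L * (1 / An)" using \<open>N w \<le> 1\<close> An(1) L0
      by (intro mult_left_mono divide_right_mono) auto
    finally show "cmod (f w) \<le> L / An" by simp
  qed
  have le1: "cmod (f w) \<le> 1" if "N w \<le> 1" for w
  proof -
    have "cmod (f w) \<in> {cmod (f x) |x. N x \<le> 1}" using that by blast
    from cSup_upper[OF this bdd] show ?thesis using d unfolding dual_norm_def by simp
  qed
  show ?thesis
  proof (cases "x = 0")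
    case True then show ?thesis using clin_fun_0[OF f] by (simp add: N_0[OF cn])
  next
    case False
    then have Nx: "N x > 0" using N_ge0[OF cn, of x] N_eq0[OF cn, of x] by linarith
    have "cmod (f ((1 / N x) *\<^sub>R x)) \<le> 1" using le1 Nx by (simp add: N_scaleR[OF cn])
    then have "cmod (f x) / N x \<le> 1" using Nx by (simp add: clin_fun_scaleR[OF f] norm_mult norm_divide)
    then show ?thesis using Nx by (simp add: field_simps)
  qed
qed

lemma statesD: "(x, f) \<in> states N \<Longrightarrow> N x = 1 \<and> clin_fun f \<and> dual_norm N f = 1 \<and> f x = 1"
  unfolding states_def by auto

end


lemma SUP_diff_le:
  fixes g h :: "'a \<Rightarrow> real"
  assumes ne: "S \<noteq> {}" and g: "\<forall>s\<in>S. g s \<le> c" and h: "\<forall>s\<in>S. h s \<le> c"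
    and d: "\<forall>s\<in>S. \<bar>g s - h s\<bar> \<le> d"
  shows "\<bar>(SUP s\<in>S. g s) - (SUP s\<in>S. h s)\<bar> \<le> d"
proof -
  have bg: "bdd_above (g ` S)" using g by (auto intro: bdd_aboveI2)
  have bh: "bdd_above (h ` S)" using h by (auto intro: bdd_aboveI2)
  have 1: "(SUP s\<in>S. g s) \<le> (SUP s\<in>S. h s) + d"
  proof (rule cSUP_least[OF ne])
    fix s assume s: "s \<in> S"
    have "h s \<le> (SUP s\<in>S. h s)" by (rule cSUP_upper[OF s bh])
    then show "g s \<le> (SUP s\<in>S. h s) + d" using d s by force
  qed
  have 2: "(SUP s\<in>S. h s) \<le> (SUP s\<in>S. g s) + d"
  proof (rule cSUP_least[OF ne])
    fix s assume s: "s \<in> S"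
    have "g s \<le> (SUP s\<in>S. g s)" by (rule cSUP_upper[OF s bg])
    then show "h s \<le> (SUP s\<in>S. g s) + d" using d s by force
  qed
  show ?thesis using 1 2 by linarith
qed

lemma SUP_scale:
  fixes g :: "'a \<Rightarrow> real"
  assumes ne: "S \<noteq> {}" and g: "\<forall>s\<in>S. g s \<le> c" and r: "0 \<le> r"
  shows "(SUP s\<in>S. r * g s) = r * (SUP s\<in>S. g s)"
proof (cases "r = 0")
  case True then show ?thesis using ne by simp
next
  case False
  then have r0: "r > 0" using r by simp
  have bg: "bdd_above (g ` S)" using g by (auto intro: bdd_aboveI2)
  have brg: "bdd_above ((\<lambda>s. r * g s) ` S)" using g r
    by (auto intro!: bdd_aboveI2[where M="r * c"] mult_left_mono)
  have 1: "(SUP s\<in>S. r * g s) \<le> r * (SUP s\<in>S. g s)"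
    by (rule cSUP_least[OF ne]) (use cSUP_upper[OF _ bg] r in \<open>auto intro: mult_left_mono\<close>)
  have "(SUP s\<in>S. g s) \<le> (SUP s\<in>S. r * g s) / r"
  proof (rule cSUP_least[OF ne])
    fix s assume s: "s \<in> S"
    have "r * g s \<le> (SUP s\<in>S. r * g s)" by (rule cSUP_upper[OF s brg])
    then show "g s \<le> (SUP s\<in>S. r * g s) / r" using r0 by (simp add: field_simps)
  qed
  then have 2: "r * (SUP s\<in>S. g s) \<le> (SUP s\<in>S. r * g s)" using r0 by (simp add: field_simps)
  show ?thesis using 1 2 by linarith
qed

definition vr :: "(complex^'n \<Rightarrow> real) \<Rightarrow> complex^'n^'n \<Rightarrow> real" where
  "vr N M = num_radius N (opm M)"

lemma nr_eq: "num_radius N T = (SUP p\<in>states N. cmod (snd p (T (fst p))))"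
proof -
  have "{cmod (f (T x)) | x f. (x, f) \<in> states N} = (\<lambda>p. cmod (snd p (T (fst p)))) ` states N"
    by force
  then show ?thesis unfolding num_radius_def by simp
qed

context
  fixes N :: "complex^'n \<Rightarrow> real"
  assumes cn: "is_cnorm N"
begin

definition "Kop = Bn N * CARD('n) / An N"

lemma Kop_ge0: "0 \<le> Kop"
  unfolding Kop_def using Bn_ge0[OF cn] An(1)[OF cn] by simp

lemma N_opm: "N (opm M y) \<le> Kop * N y * norm M"
proof -
  have "N (opm M y) \<le> Bn N * norm (opm M y)" by (rule N_upper[OF cn])
  also have "\<dots> \<le> Bn N * (CARD('n) * norm y * norm M)"
    using norm_opm Bn_ge0[OF cn] by (intro mult_left_mono) auto
  also have "\<dots> \<le> Bn N * (CARD('n) * (N y / An N) * norm M)"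
    using norm_le_N[OF cn, of y] Bn_ge0[OF cn]
    by (intro mult_left_mono mult_right_mono) auto
  also have "\<dots> = Kop * N y * norm M" unfolding Kop_def by simp
  finally show ?thesis .
qed

lemma state_bound:
  assumes "p \<in> states N"
  shows "cmod (snd p (opm M (fst p))) \<le> Kop * norm M"
proof -
  obtain x f where p: "p = (x, f)" by force
  have s: "N x = 1" "clin_fun f" "dual_norm N f = 1" using statesD[OF cn] assms p by auto
  have "cmod (f (opm M x)) \<le> N (opm M x)" by (rule dual_bound[OF cn s(2,3)])
  also have "\<dots> \<le> Kop * norm M" using N_opm[of M x] s(1) by simp
  finally show ?thesis using p by simp
qed

lemma vr_upper:
  assumes "p \<in> states N"
  shows "cmod (snd p (opm M (fst p))) \<le> vr N M"
proof -
  have "bdd_above ((\<lambda>p. cmod (snd p (opm M (fst p)))) ` states N)"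
    by (rule bdd_aboveI2[where M="Kop * norm M"], rule state_bound)
  then show ?thesis unfolding vr_def nr_eq using assms by (rule cSUP_upper2) simp
qed

lemma vr_ge0: "0 \<le> vr N M"
proof -
  obtain p where "p \<in> states N" using states_ne[OF cn] by blast
  then show ?thesis using vr_upper[of p M] by (meson norm_ge_zero order_trans)
qed

lemma vr_lip: "\<bar>vr N M - vr N M'\<bar> \<le> Kop * dist M M'"
  unfolding vr_def nr_eq
proof (rule SUP_diff_le[OF states_ne[OF cn]])
  have mono: "Kop * norm X \<le> Kop * (norm M + norm M')" if "X = M \<or> X = M'" for X :: "complex^'n^'n"
    using that Kop_ge0 by (auto intro!: mult_left_mono)
  show "\<forall>s\<in>states N. cmod (snd s (opm M (fst s))) \<le> Kop * (norm M + norm M')"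
    using state_bound[of _ M] mono[of M] by (meson order_trans)
  show "\<forall>s\<in>states N. cmod (snd s (opm M' (fst s))) \<le> Kop * (norm M + norm M')"
    using state_bound[of _ M'] mono[of M'] by (meson order_trans)
  show "\<forall>s\<in>states N. \<bar>cmod (snd s (opm M (fst s))) - cmod (snd s (opm M' (fst s)))\<bar> \<le> Kop * dist M M'"
  proof
    fix p assume p: "p \<in> states N"
    obtain x f where px: "p = (x, f)" by force
    have s: "clin_fun f" using statesD[OF cn] p px by auto
    have "\<bar>cmod (f (opm M x)) - cmod (f (opm M' x))\<bar> \<le> cmod (f (opm M x) - f (opm M' x))"
      by (rule norm_triangle_ineq3)
    also have "\<dots> = cmod (snd p (opm (M - M') (fst p)))"
      using px by (simp add: opm_diff clin_fun_diff[OF s])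
    also have "\<dots> \<le> Kop * dist M M'" using state_bound[OF p] by (simp add: dist_norm)
    finally show "\<bar>cmod (snd p (opm M (fst p))) - cmod (snd p (opm M' (fst p)))\<bar> \<le> Kop * dist M M'"
      using px by simp
  qed
qed

lemma vr_cont: "continuous_on S (vr N)"
  by (rule lip_cont[OF cn vr_lip Kop_ge0])

lemma vr_scale:
  assumes "0 \<le> r"
  shows "vr N (r *\<^sub>R M) = r * vr N M"
proof -
  have "(SUP p\<in>states N. cmod (snd p (opm (r *\<^sub>R M) (fst p)))) =
        (SUP p\<in>states N. r * cmod (snd p (opm M (fst p))))"
  proof (rule SUP_cong[OF refl])
    fix p assume p: "p \<in> states N"
    obtain x f where px: "p = (x, f)" by force
    have s: "clin_fun f" using statesD[OF cn] p px by auto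
    show "cmod (snd p (opm (r *\<^sub>R M) (fst p))) = r * cmod (snd p (opm M (fst p)))"
      using px assms by (simp add: opm_scaleR clin_fun_scaleR[OF s] norm_mult)
  qed
  also have "\<dots> = r * (SUP p\<in>states N. cmod (snd p (opm M (fst p))))"
    by (rule SUP_scale[OF states_ne[OF cn] _ assms], rule ballI, rule state_bound)
  finally show ?thesis unfolding vr_def nr_eq .
qed

lemma opnorm_bound: "op_norm N (opm D) \<le> Kop * norm D"
  unfolding op_norm_def
proof (rule cSup_least)
  have "N (opm D 0) \<in> {N (opm D x) |x. N x \<le> 1}" by (auto simp: N_0[OF cn])
  then show "{N (opm D x) |x. N x \<le> 1} \<noteq> {}" by (metis empty_iff)
  fix z assume "z \<in> {N (opm D x) |x. N x \<le> 1}"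
  then obtain x where x: "z = N (opm D x)" "N x \<le> 1" by blast
  have "N (opm D x) \<le> Kop * N x * norm D" by (rule N_opm)
  also have "\<dots> \<le> Kop * 1 * norm D" using x(2) Kop_ge0
    by (intro mult_right_mono mult_left_mono) auto
  finally show "z \<le> Kop * norm D" using x by simp
qed

end


definition opoly :: "complex poly \<Rightarrow> (complex^'n \<Rightarrow> complex^'n) \<Rightarrow> complex^'n \<Rightarrow> complex^'n" where
  "opoly p T = fold_coeffs (\<lambda>a g w. a *s w + g (T w)) p (\<lambda>w. 0)"

lemma opoly_0[simp]: "opoly 0 T w = 0"
  by (simp add: opoly_def)

lemma opoly_pCons[simp]: "opoly (pCons a p) T w = a *s w + opoly p T (T w)"
proof (cases "p = 0")
  case True
  show ?thesis
  proof (cases "a = 0")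
    case True with \<open>p = 0\<close> show ?thesis by simp
  next
    case False with \<open>p = 0\<close> show ?thesis by (simp add: opoly_def)
  qed
next
  case False then show ?thesis by (simp add: opoly_def)
qed

lemma opoly_add: "opoly (p + q) T w = opoly p T w + opoly q T w"
proof (induct p arbitrary: q w)
  case 0 then show ?case by simp
next
  case (pCons a p)
  obtain b q' where q: "q = pCons b q'" by (cases q) auto
  show ?case using pCons(2)[of q' "T w"] unfolding q
    by (simp add: vector_sadd_rdistrib algebra_simps)
qed

lemma opoly_smult: "opoly (smult c p) T w = c *s opoly p T w"
proof (induct p arbitrary: w)
  case 0 then show ?case by simp
next
  case (pCons a p)
  then show ?case by (simp add: vector_add_ldistrib vector_smult_assoc)
qed

lemma opoly_minus: "opoly (- p) T w = - opoly p T w"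
proof -
  have "opoly (- p + p) T w = 0" by simp
  then show ?thesis unfolding opoly_add by (simp add: eq_neg_iff_add_eq_0)
qed

lemma opoly_diff: "opoly (p - q) T w = opoly p T w - opoly q T w"
  using opoly_add[of p "- q" T w] opoly_minus[of q T w] by simp

lemma opoly_monom: "opoly (monom c k) T w = c *s (T^^k) w"
proof (induct k arbitrary: w)
  case 0 then show ?case by (simp add: monom_0)
next
  case (Suc k) then show ?case by (simp add: monom_Suc funpow_swap1)
qed

lemma opoly_sum: "opoly (sum P I) T w = (\<Sum>i\<in>I. opoly (P i) T w)"
  by (induct I rule: infinite_finite_induct) (simp_all add: opoly_add)

lemma opoly_xpow: "opoly ([:0,1:]^m * p) T w = opoly p T ((T^^m) w)"
proof (induct m arbitrary: w)
  case 0 then show ?case by simp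
next
  case (Suc m)
  have "[:0,1:]^Suc m * p = pCons 0 ([:0,1:]^m * p)" by (simp add: mult.assoc)
  then show ?case using Suc by (simp add: funpow_swap1)
qed

lemma opoly_w_linear:
  assumes T: "clin_op T"
  shows "opoly p T (w1 + w2) = opoly p T w1 + opoly p T w2"
    and "opoly p T (c *s w) = c *s opoly p T w"
proof -
  have TA: "T (x + y) = T x + T y" and TS: "T (d *s x) = d *s T x" for x y d
    using T unfolding clin_op_def by auto
  show "opoly p T (w1 + w2) = opoly p T w1 + opoly p T w2"
  proof (induct p arbitrary: w1 w2)
    case 0 then show ?case by simp
  next
    case (pCons a p) then show ?case by (simp add: TA vector_add_ldistrib algebra_simps)
  qed
  show "opoly p T (c *s w) = c *s opoly p T w"
  proof (induct p arbitrary: w)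
    case 0 then show ?case by simp
  next
    case (pCons a p) then show ?case
      by (simp add: TS vector_add_ldistrib vector_smult_assoc mult.commute)
  qed
qed

lemma opoly_comm:
  assumes T: "clin_op T"
  shows "opoly p T (T w) = T (opoly p T w)"
proof (induct p arbitrary: w)
  case 0 then show ?case using clin_op_0[OF T] by simp
next
  case (pCons a p) then show ?case using T unfolding clin_op_def by simp
qed

lemma opoly_lin:
  assumes T: "clin_op T"
  shows "opoly ([:a, b:] * q) T w = a *s opoly q T w + b *s T (opoly q T w)"
proof -
  have "[:a, b:] * q = smult a q + pCons 0 (smult b q)" by simp
  then show ?thesis using T unfolding clin_op_def by (simp add: opoly_add opoly_smult opoly_comm[OF T])
qed

lemma exists_annih:
  fixes T :: "complex^'n \<Rightarrow> complex^'n"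
  shows "\<exists>p. p \<noteq> 0 \<and> opoly p T w = 0"
proof -
  define V where "V k = (T^^k) w" for k
  define I where "I = {0..CARD('n)}"
  show ?thesis
  proof (cases "inj_on V I")
    case False
    then obtain i j where ij: "i \<noteq> j" "V i = V j" unfolding inj_on_def by blast
    define p where "p = monom (1::complex) i - monom 1 j"
    have "coeff p i = 1" using ij unfolding p_def by simp
    then have "p \<noteq> 0" by auto
    moreover have "opoly p T w = 0" using ij unfolding p_def V_def by (simp add: opoly_diff opoly_monom)
    ultimately show ?thesis by blast
  next
    case True
    let ?S = "V ` I"
    have cardS: "card ?S = CARD('n) + 1" using True unfolding I_def by (simp add: card_image)
    have dep: "vec.dependent ?S"
    proof (rule ccontr)
      assume "\<not> vec.dependent ?S"
      then have "card ?S \<le> vec.dim ?S" using vec.independent_bound_general by blast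
      also have "\<dots> \<le> CARD('n)" by (rule dim_subset_UNIV_cart_gen)
      finally show False using cardS by simp
    qed
    then obtain t u where tu: "finite t" "t \<subseteq> ?S" "(\<Sum>v\<in>t. u v *s v) = 0" "\<exists>v\<in>t. u v \<noteq> 0"
      unfolding vec.dependent_explicit by blast
    define c where "c k = (if V k \<in> t then u (V k) else 0)" for k
    define p where "p = (\<Sum>k\<in>I. monom (c k) k)"
    have fI: "finite I" unfolding I_def by simp
    have "opoly p T w = (\<Sum>k\<in>I. c k *s V k)"
      unfolding p_def opoly_sum opoly_monom V_def by simp
    also have "\<dots> = (\<Sum>k\<in>I. if k \<in> {k. V k \<in> t} then u (V k) *s V k else 0)"
      unfolding c_def by (intro sum.cong) auto
    also have "\<dots> = (\<Sum>k\<in>I \<inter> {k. V k \<in> t}. u (V k) *s V k)"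
      by (rule sum.inter_restrict[OF fI, symmetric])
    also have "\<dots> = (\<Sum>v\<in>V ` (I \<inter> {k. V k \<in> t}). u v *s v)"
      by (rule sum.reindex[symmetric, unfolded comp_def]) (use True in \<open>auto intro: inj_on_subset\<close>)
    also have "V ` (I \<inter> {k. V k \<in> t}) = t" using tu(2) by auto
    finally have z: "opoly p T w = 0" using tu(3) by simp
    obtain v where v: "v \<in> t" "u v \<noteq> 0" using tu(4) by blast
    then obtain k0 where k0: "k0 \<in> I" "v = V k0" using tu(2) by blast
    have "coeff p k0 = (\<Sum>k\<in>I. if k = k0 then c k else 0)"
      unfolding p_def coeff_sum by simp
    also have "\<dots> = c k0" using k0 fI by simp
    also have "\<dots> = u v" using k0 v unfolding c_def by simp
    finally have "p \<noteq> 0" using v by auto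
    then show ?thesis using z by blast
  qed
qed



context
  fixes N :: "complex^'n \<Rightarrow> real"
  assumes cn: "is_cnorm N"
begin

lemma Q1:
  assumes T: "clin_op T" and star: "\<And>w z. N w \<le> N (w + z *s T w)"
  shows "poly q 0 = 1 \<Longrightarrow> N w \<le> N (opoly q T w)"
proof (induct "degree q" arbitrary: q rule: less_induct)
  case less
  show ?case
  proof (cases "degree q = 0")
    case True
    then have "q = [:coeff q 0:]" using degree_0_id by metis
    moreover have "coeff q 0 = 1" using less.prems by (simp add: poly_0_coeff_0)
    ultimately have "q = [:1:]" by simp
    then show ?thesis by simp
  next
    case False
    then have "\<not> constant (poly q)" by (simp add: constant_degree)
    then obtain r where r: "poly q r = 0" using fundamental_theorem_of_algebra by blast
    have r0: "r \<noteq> 0" using r less.prems by auto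
    obtain q1 where q1: "q = [:-r,1:] * q1" using r poly_eq_0_iff_dvd by (metis dvdE)
    have qnz: "q \<noteq> 0" using less.prems by auto
    then have q1nz: "q1 \<noteq> 0" using q1 by auto
    define q2 where "q2 = smult (-r) q1"
    have qq: "q = [:1, -1/r:] * q2"
    proof -
      have "[:1, -1/r:] * q2 = smult (-r) [:1, -1/r:] * q1" unfolding q2_def
        by (simp only: mult_smult_left mult_smult_right)
      also have "smult (-r) [:1, -1/r:] = [:-r, 1:]" using r0 by simp
      finally show ?thesis using q1 by simp
    qed
    have "degree ([:-r,1:] * q1) = degree [:-r,1:] + degree q1"
      by (rule degree_mult_eq) (use q1nz in simp_all)
    then have dq: "degree q = degree q1 + 1" using q1 by simp
    have dq2: "degree q2 < degree q" using dq r0 unfolding q2_def by simp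
    have pq2: "poly q2 0 = 1" using less.prems qq by simp
    have IH: "N w \<le> N (opoly q2 T w)" by (rule less.hyps[OF dq2 pq2])
    have "opoly q T w = opoly q2 T w + (-1/r) *s T (opoly q2 T w)"
      unfolding qq opoly_lin[OF T] by simp
    then show ?thesis using IH star[of "opoly q2 T w" "-1/r"] by simp
  qed
qed

lemma Q2:
  assumes T: "clin_op T" and star: "\<And>w z. N w \<le> N (w + z *s T w)"
  shows "\<exists>m. (T^^m) w = 0"
proof -
  obtain p where p: "p \<noteq> 0" "opoly p T w = 0" using exists_annih by blast
  obtain p1 where p1: "p = [:-0,1:]^order 0 p * p1" "\<not> [:-0,1:] dvd p1"
    using order_decomp[OF p(1), of 0] by blast
  define m where "m = order 0 p"
  have c: "poly p1 0 \<noteq> 0" using p1(2) poly_eq_0_iff_dvd[of p1 0] by simp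
  have "p = [:0,1:]^m * p1" using p1(1) unfolding m_def by simp
  then have z: "opoly p1 T ((T^^m) w) = 0" using p(2) opoly_xpow by metis
  define q where "q = smult (1 / poly p1 0) p1"
  have pq: "poly q 0 = 1" using c unfolding q_def by simp
  have "opoly q T ((T^^m) w) = 0" unfolding q_def opoly_smult z by simp
  then have "N ((T^^m) w) \<le> 0" using Q1[OF T star pq, of "(T^^m) w"] by (simp add: N_0[OF cn])
  then have "N ((T^^m) w) = 0" using N_ge0[OF cn, of "(T^^m) w"] by linarith
  then show ?thesis using N_eq0[OF cn] by blast
qed

lemma Q3:
  assumes T: "clin_op T" and star: "\<And>w z. N w \<le> N (w + z *s T w)"
  shows "T (T y) = 0 \<Longrightarrow> T y = 0"
proof (rule ccontr)
  assume TT: "T (T y) = 0" and ne: "T y \<noteq> 0"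
  define u where "u = T y"
  have Nu: "N u > 0" using ne N_ge0[OF cn, of u] N_eq0[OF cn, of u] unfolding u_def by linarith
  have le: "N (y + c *s u) \<le> N y" for c
  proof -
    have "T (y + c *s u) = u" using T TT unfolding clin_op_def u_def by simp
    then have "(y + c *s u) + (-c) *s T (y + c *s u) = y"
      by (simp add: vec_eq_iff algebra_simps)
    note eq = this
    have "N (y + c *s u) \<le> N ((y + c *s u) + (-c) *s T (y + c *s u))" by (rule star)
    also have "\<dots> = N y" by (simp only: eq)
    finally show ?thesis .
  qed
  define c where "c = complex_of_real ((2 * N y + 1) / N u)"
  have "N (c *s u) = 2 * N y + 1"
    unfolding c_def N_hom[OF cn] norm_of_real using Nu N_ge0[OF cn, of y] by (simp add: field_simps)
  moreover have "N (c *s u) \<le> N (y + c *s u) + N y"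
    using N_diff[OF cn, of "y + c *s u" y] by simp
  ultimately show False using le[of c] by linarith
qed

lemma Q4:
  assumes T: "clin_op T" and star: "\<And>w z. N w \<le> N (w + z *s T w)"
  shows "T w = 0"
proof -
  have "\<forall>w. (T^^m) w = 0 \<longrightarrow> T w = 0" for m
  proof (induct m)
    case 0 then show ?case using clin_op_0[OF T] by simp
  next
    case (Suc m)
    show ?case
    proof (intro allI impI)
      fix w assume "(T^^Suc m) w = 0"
      then have "(T^^m) (T w) = 0" by (simp add: funpow_swap1)
      then have "T (T w) = 0" using Suc by blast
      then show "T w = 0" by (rule Q3[OF T star])
    qed
  qed
  then show ?thesis using Q2[OF T star, of w] by blast
qed

lemma vr_zero:
  assumes "vr N M = 0"
  shows "M = 0"
proof -
  define T where "T = opm M"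
  have T: "clin_op T" unfolding T_def by (rule clin_op_opm)
  have fz: "f (T x) = 0" if "(x, f) \<in> states N" for x f
    using vr_upper[OF cn that, of M] assms unfolding T_def by simp
  have star: "N w \<le> N (w + z *s T w)" for w z
  proof (cases "w = 0")
    case True then show ?thesis using N_ge0[OF cn] by (simp add: N_0[OF cn])
  next
    case False
    then have Nw: "N w > 0" using N_ge0[OF cn, of w] N_eq0[OF cn, of w] by linarith
    define s where "s = complex_of_real (1 / N w)"
    have Ny: "N (s *s w) = 1" unfolding s_def N_hom[OF cn] using Nw by (simp add: norm_divide)
    obtain f where f: "(s *s w, f) \<in> states N" using HB[OF cn Ny] by blast
    have sf: "clin_fun f" "dual_norm N f = 1" "f (s *s w) = 1" using statesD[OF cn f] by auto
    have e: "s *s w + z *s T (s *s w) = s *s (w + z *s T w)"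
      using T unfolding clin_op_def by (simp add: vec_eq_iff algebra_simps)
    have "f (s *s w + z *s T (s *s w)) = 1"
      using sf(1,3) fz[OF f] unfolding clin_fun_def by simp
    then have "1 \<le> N (s *s w + z *s T (s *s w))"
      using dual_bound[OF cn sf(1,2), of "s *s w + z *s T (s *s w)"] by simp
    also have "\<dots> = N (s *s (w + z *s T w))" by (simp only: e)
    also have "\<dots> = N (w + z *s T w) / N w" unfolding N_hom[OF cn] s_def using Nw by (simp add: norm_divide)
    finally show ?thesis using Nw by (simp add: field_simps)
  qed
  have "M $ i = 0" for i
    using Q4[OF T star, of "axis i 1"] unfolding T_def opm_axis .
  then show ?thesis by (simp add: vec_eq_iff)
qed

lemma vr_lower: "\<exists>c>0. \<forall>M. c * norm M \<le> vr N M"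
proof -
  obtain e :: "complex^'n^'n" where e: "norm e = 1" using vector_choose_size[of 1] by auto
  have "compact (sphere (0::complex^'n^'n) 1)" by simp
  moreover have "sphere (0::complex^'n^'n) 1 \<noteq> {}" using e by auto
  ultimately obtain M0 where M0: "M0 \<in> sphere 0 1" "\<forall>M\<in>sphere 0 1. vr N M0 \<le> vr N M"
    using continuous_attains_inf[OF _ _ vr_cont[OF cn]] by blast
  have "M0 \<noteq> 0" using M0 by auto
  then have c: "vr N M0 > 0" using vr_zero vr_ge0[OF cn, of M0] by force
  show ?thesis
  proof (intro exI[of _ "vr N M0"] conjI allI c)
    fix M :: "complex^'n^'n"
    show "vr N M0 * norm M \<le> vr N M"
    proof (cases "M = 0")
      case True then show ?thesis using vr_ge0[OF cn] by simp
    next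
      case False
      have "(1 / norm M) *\<^sub>R M \<in> sphere 0 1" using False by simp
      then have "vr N M0 \<le> vr N ((1 / norm M) *\<^sub>R M)" using M0 by blast
      also have "\<dots> = vr N M / norm M" by (simp add: vr_scale[OF cn])
      finally show ?thesis using False by (simp add: field_simps)
    qed
  qed
qed

end


context
  fixes N :: "complex^'n \<Rightarrow> real"
  assumes cn: "is_cnorm N"
begin

lemma main_Lpp: "Lpp_nu N"
  unfolding Lpp_nu_def
proof (intro allI impI ballI, clarify)
  fix \<epsilon> :: real and x f
  assume e: "0 < \<epsilon>" and xf: "(x, f) \<in> states N"
  have sf: "N x = 1" "clin_fun f" "dual_norm N f = 1" using statesD[OF cn xf] by auto
  define g where "g M = cmod (f (opm M x))" for M
  obtain c where c: "c > 0" "\<And>M. c * norm M \<le> vr N M" using vr_lower[OF cn] by blast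
  define \<delta> where "\<delta> = \<epsilon> / (Kop N + 1)"
  have K0: "0 \<le> Kop N" by (rule Kop_ge0[OF cn])
  have d0: "\<delta> > 0" unfolding \<delta>_def using e K0 by simp
  define K where "K = {M. vr N M = 1 \<and> g M = 1}"
  define C where "C = {M. vr N M = 1 \<and> (\<forall>M'\<in>K. \<delta> \<le> dist M' M)}"
  have gle: "g M \<le> 1" if "vr N M = 1" for M
    using vr_upper[OF cn xf, of M] that unfolding g_def by simp
  have glip: "\<bar>g M - g M'\<bar> \<le> Kop N * dist M M'" for M M'
  proof -
    have "\<bar>g M - g M'\<bar> \<le> cmod (f (opm M x) - f (opm M' x))"
      unfolding g_def by (rule norm_triangle_ineq3)
    also have "\<dots> = cmod (snd (x, f) (opm (M - M') (fst (x, f))))"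
      by (simp add: opm_diff clin_fun_diff[OF sf(2)])
    also have "\<dots> \<le> Kop N * dist M M'" using state_bound[OF cn xf] by (simp add: dist_norm)
    finally show ?thesis .
  qed
  have gcont: "continuous_on S g" for S by (rule lip_cont[OF cn glip K0])
  have closed1: "closed {M. vr N M = 1}"
    by (rule closed_Collect_eq) (auto intro: vr_cont[OF cn])
  have closed2: "closed {M. \<delta> \<le> dist M' M}" for M' :: "complex^'n^'n"
  proof -
    have "{M. \<delta> \<le> dist M' M} = - ball M' \<delta>" by (auto simp: ball_def)
    then show ?thesis by (simp add: closed_Compl)
  qed
  have "C = {M. vr N M = 1} \<inter> (\<Inter>M'\<in>K. {M. \<delta> \<le> dist M' M})" unfolding C_def by auto
  then have clC: "closed C" using closed1 closed2 by (auto intro!: closed_Int closed_INT)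
  have bC: "bounded C"
  proof -
    have "norm M \<le> 1 / c" if "M \<in> C" for M
      using c(2)[of M] that c(1) unfolding C_def by (simp add: field_simps)
    then show ?thesis unfolding bounded_iff by blast
  qed
  have cC: "compact C" using clC bC by (simp add: compact_eq_bounded_closed)
  have "\<exists>\<eta>>0. \<forall>M. vr N M = 1 \<and> g M > 1 - \<eta> \<longrightarrow> (\<exists>M'\<in>K. dist M' M < \<delta>)"
  proof (cases "C = {}")
    case True
    show ?thesis
    proof (intro exI[of _ 1] conjI allI impI)
      fix M assume "vr N M = 1 \<and> g M > 1 - 1"
      then have "M \<notin> C" "vr N M = 1" using True by auto
      then show "\<exists>M'\<in>K. dist M' M < \<delta>" unfolding C_def by force
    qed simp
  next
    case False
    obtain M0 where M0: "M0 \<in> C" "\<forall>M\<in>C. g M \<le> g M0"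
      using continuous_attains_sup[OF cC False gcont] by blast
    have "g M0 \<noteq> 1"
    proof
      assume "g M0 = 1"
      then have "M0 \<in> K" using M0(1) unfolding K_def C_def by auto
      then have "\<delta> \<le> dist M0 M0" using M0(1) unfolding C_def by auto
      then show False using d0 by simp
    qed
    moreover have "g M0 \<le> 1" using gle M0(1) unfolding C_def by auto
    ultimately have lt: "g M0 < 1" by simp
    show ?thesis
    proof (intro exI[of _ "1 - g M0"] conjI allI impI)
      show "0 < 1 - g M0" using lt by simp
      fix M assume M: "vr N M = 1 \<and> g M > 1 - (1 - g M0)"
      then have "M \<notin> C" using M0(2) by force
      then show "\<exists>M'\<in>K. dist M' M < \<delta>" using M unfolding C_def by force
    qed
  qed
  then obtain \<eta> where eta: "\<eta> > 0" "\<And>M. vr N M = 1 \<Longrightarrow> g M > 1 - \<eta> \<Longrightarrow> \<exists>M'\<in>K. dist M' M < \<delta>"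
    by blast
  show "\<exists>\<eta>>0. \<forall>T. clin_op T \<and> num_radius N T = 1 \<and> 1 - \<eta> < cmod (f (T x)) \<longrightarrow>
          (\<exists>S. clin_op S \<and> num_radius N S = 1 \<and> cmod (f (S x)) = 1 \<and>
               op_norm N (\<lambda>y. S y - T y) < \<epsilon>)"
  proof (intro exI[of _ \<eta>] conjI allI impI eta(1), elim conjE)
    fix T assume T: "clin_op T" and vT: "num_radius N T = 1" and gT: "1 - \<eta> < cmod (f (T x))"
    define M where "M = (\<chi> i. T (axis i 1))"
    have TM: "T = opm M" unfolding M_def by (rule opm_of_op[OF T])
    have "vr N M = 1" using vT TM unfolding vr_def by simp
    moreover have "g M > 1 - \<eta>" using gT TM unfolding g_def by simp
    ultimately obtain M' where M': "M' \<in> K" "dist M' M < \<delta>" using eta(2) by blast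
    show "\<exists>S. clin_op S \<and> num_radius N S = 1 \<and> cmod (f (S x)) = 1 \<and>
               op_norm N (\<lambda>y. S y - T y) < \<epsilon>"
    proof (intro exI[of _ "opm M'"] conjI)
      show "clin_op (opm M')" by (rule clin_op_opm)
      show "num_radius N (opm M') = 1" using M'(1) unfolding K_def vr_def by simp
      show "cmod (f (opm M' x)) = 1" using M'(1) unfolding K_def g_def by simp
      have "(\<lambda>y. opm M' y - T y) = opm (M' - M)" unfolding TM by (simp add: opm_diff fun_eq_iff)
      then have "op_norm N (\<lambda>y. opm M' y - T y) \<le> Kop N * dist M' M"
        using opnorm_bound[OF cn, of "M' - M"] by (simp add: dist_norm)
      also have "\<dots> \<le> Kop N * \<delta>" using M'(2) K0 by (intro mult_left_mono) auto
      also have "\<dots> < \<epsilon>" unfolding \<delta>_def using e K0 by (simp add: field_simps)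
      finally show "op_norm N (\<lambda>y. opm M' y - T y) < \<epsilon>" .
    qed
  qed
qed

end

theorem corollary3p4:
  fixes N :: "complex^'n \<Rightarrow> real"
  assumes "is_cnorm N"
  shows "Lpp_nu N"
  by (rule main_Lpp[OF assms])


end
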